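(* Let $I$ be a composition of $n$ with valley set $V$, and let $Cl_V\subseteq Cl_n$ be the subalgebra generated by $(c_v)_{v\in V}$. For $c\in Cl_V$ define $f_c:M_I\to M_I$ by $f_c(x\epsilon_I)=xc\,\epsilon_I$ for all $x\in Cl_n$. Then each $f_c$ is a well-defined endomorphism of $M_I$ as an $HCl_n(0)$-module, $c\mapsto f_c$ defines a right action of $Cl_V$ on $M_I$ (that is, $f_{cc'}=f_{c'}\circ f_c$) commuting with the left $HCl_n(0)$-action, and $c\mapsto f_c$ is a bijective, $\mathbb{Z}/2$-grading-preserving map from $Cl_V$ onto $\operatorname{End}_{HCl_n(0)}(M_I)$. In other words, it is a grading-preserving anti-isomorphism of algebras, which the paper describes as a graded isomorphism.
   Context: For a composition $I=(i_1,\dots,i_r)$ of $n$, $\operatorname{Des}(I)=\{i_1,\dots,i_1+\cdots+i_{r-1}\}\subseteq[1,n-1]$. A valley of $I$ is $k\in\{1,\dots,n\}$ with $k\notin\operatorname{Des}(I)$ and (either $k=1$ or $k-1\in\operatorname{Des}(I)$). $Cl_n$ is the complex Clifford algebra on $c_1,\dots,c_n$ with $c_ic_j=-c_jc_i$ ($i\ne j$) and $c_i^2=-1$. $HCl_n(0)$ is the complex algebra generated by $T_1,\dots,T_{n-1}$ and $c_1,\dots,c_n$ with the Clifford relations, $T_i^2=-T_i$, $T_iT_j=T_jT_i$ ($|i-j|>1$), $T_iT_{i+1}T_i=T_{i+1}T_iT_{i+1}$, $T_ic_j=c_jT_i$ ($j\ne i,i+1$), $T_ic_i=c_{i+1}T_i$,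 and $(T_i+1)c_{i+1}=c_i(T_i+1)$. It is $\mathbb{Z}/2$-graded with $T_i$ even and $c_j$ odd. $H_n(0)$ is the subalgebra generated by the $T_i$. $S_I=\mathbb{C}\epsilon_I$ is the $H_n(0)$-module with $T_j\epsilon_I=-\epsilon_I$ if $j\in\operatorname{Des}(I)$ and $T_j\epsilon_I=0$ otherwise, and $M_I=HCl_n(0)\otimes_{H_n(0)}S_I$. $M_I$ is a free $Cl_n$-module of rank one generated by $\epsilon_I$, with basis $c_D\epsilon_I$ for $D\subseteq\{1,\dots,n\}$ (where $c_D=c_{d_1}\cdots c_{d_k}$ for $D=\{d_1<\dots<d_k\}$), graded by the parity of $|D|$. *)

theory Defs
  imports "HOL-Analysis.Analysis"
begin

definition is_composition :: "nat list \<Rightarrow> nat \<Rightarrow> bool" where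
  "is_composition I n \<longleftrightarrow> (\<forall>i\<in>set I. 0 < i) \<and> sum_list I = n"

definition Des :: "nat list \<Rightarrow> nat set" where
  "Des I = {sum_list (take k I) | k. 1 \<le> k \<and> k < length I}"

definition valleys :: "nat list \<Rightarrow> nat \<Rightarrow> nat set" where
  "valleys I n = {k \<in> {1..n}. k \<notin> Des I \<and> (k = 1 \<or> k - 1 \<in> Des I)}"

text \<open>Elements of Cl_n are written in the basis c_D (D a subset of {1..n}) as
  coefficient functions x :: nat set => complex supported on subsets of {1..n}.
  The product of basis elements is c_D c_E = (-1)^(inv(D,E) + |D \<inter> E|) c_(D sym-diff E),
  which is the multiplication of the algebra generated by c_1..c_n subject to
  c_i c_j = - c_j c_i (i \<noteq> j) and c_i^2 = -1.\<close>

definition clifford :: "nat \<Rightarrow> (nat set \<Rightarrow> complex) set" where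
  "clifford n = {x. \<forall>D. x D \<noteq> 0 \<longrightarrow> D \<subseteq> {1..n}}"

definition symdiff :: "nat set \<Rightarrow> nat set \<Rightarrow> nat set" where
  "symdiff D E = (D - E) \<union> (E - D)"

definition clsign :: "nat set \<Rightarrow> nat set \<Rightarrow> complex" where
  "clsign D E = (-1) ^ (card {(a, b). a \<in> D \<and> b \<in> E \<and> b < a} + card (D \<inter> E))"

definition clmul :: "nat \<Rightarrow> (nat set \<Rightarrow> complex) \<Rightarrow> (nat set \<Rightarrow> complex) \<Rightarrow> (nat set \<Rightarrow> complex)" where
  "clmul n x y = (\<lambda>E. \<Sum>D\<in>Pow {1..n}. x D * y (symdiff D E) * clsign D (symdiff D E))"

definition clone :: "nat set \<Rightarrow> complex" where
  "clone = (\<lambda>D. if D = {} then 1 else 0)"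

definition clgen :: "nat \<Rightarrow> nat set \<Rightarrow> complex" where
  "clgen i = (\<lambda>D. if D = {i} then 1 else 0)"

definition cladd :: "(nat set \<Rightarrow> complex) \<Rightarrow> (nat set \<Rightarrow> complex) \<Rightarrow> (nat set \<Rightarrow> complex)" where
  "cladd x y = (\<lambda>D. x D + y D)"

definition clscale :: "complex \<Rightarrow> (nat set \<Rightarrow> complex) \<Rightarrow> (nat set \<Rightarrow> complex)" where
  "clscale a x = (\<lambda>D. a * x D)"

inductive_set clsub :: "nat \<Rightarrow> nat set \<Rightarrow> (nat set \<Rightarrow> complex) set" for n V where
  one: "clone \<in> clsub n V"
| gen: "v \<in> V \<Longrightarrow> clgen v \<in> clsub n V"
| add: "x \<in> clsub n V \<Longrightarrow> y \<in> clsub n V \<Longrightarrow> cladd x y \<in> clsub n V"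
| scale: "x \<in> clsub n V \<Longrightarrow> clscale a x \<in> clsub n V"
| mul: "x \<in> clsub n V \<Longrightarrow> y \<in> clsub n V \<Longrightarrow> clmul n x y \<in> clsub n V"

definition cl_even :: "(nat set \<Rightarrow> complex) \<Rightarrow> bool" where
  "cl_even x \<longleftrightarrow> (\<forall>D. x D \<noteq> 0 \<longrightarrow> even (card D))"

definition cl_odd :: "(nat set \<Rightarrow> complex) \<Rightarrow> bool" where
  "cl_odd x \<longleftrightarrow> (\<forall>D. x D \<noteq> 0 \<longrightarrow> odd (card D))"

text \<open>A left HCl_n(0)-module structure on the complex vector space ('m, sc) is given
  by linear operators C j (action of c_j, 1 \<le> j \<le> n) and T i (action of T_i,
  1 \<le> i \<le> n-1) satisfying the defining relations of HCl_n(0).\<close>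
definition hcl_module :: "nat \<Rightarrow> (complex \<Rightarrow> 'm::ab_group_add \<Rightarrow> 'm) \<Rightarrow>
    (nat \<Rightarrow> 'm \<Rightarrow> 'm) \<Rightarrow> (nat \<Rightarrow> 'm \<Rightarrow> 'm) \<Rightarrow> bool" where
  "hcl_module n sc C T \<longleftrightarrow>
     vector_space sc \<and>
     (\<forall>j\<in>{1..n}. Vector_Spaces.linear sc sc (C j)) \<and>
     (\<forall>i\<in>{1..<n}. Vector_Spaces.linear sc sc (T i)) \<and>
     (\<forall>i\<in>{1..n}. \<forall>j\<in>{1..n}. i \<noteq> j \<longrightarrow> (\<forall>m. C i (C j m) = - C j (C i m))) \<and>
     (\<forall>i\<in>{1..n}. \<forall>m. C i (C i m) = - m) \<and>
     (\<forall>i\<in>{1..<n}. \<forall>m. T i (T i m) = - T i m) \<and>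
     (\<forall>i\<in>{1..<n}. \<forall>j\<in>{1..<n}. (i + 1 < j \<or> j + 1 < i) \<longrightarrow> (\<forall>m. T i (T j m) = T j (T i m))) \<and>
     (\<forall>i. 1 \<le> i \<and> i + 1 < n \<longrightarrow> (\<forall>m. T i (T (i+1) (T i m)) = T (i+1) (T i (T (i+1) m)))) \<and>
     (\<forall>i\<in>{1..<n}. \<forall>j\<in>{1..n}. j \<noteq> i \<and> j \<noteq> i + 1 \<longrightarrow> (\<forall>m. T i (C j m) = C j (T i m))) \<and>
     (\<forall>i\<in>{1..<n}. \<forall>m. T i (C i m) = C (i+1) (T i m)) \<and>
     (\<forall>i\<in>{1..<n}. \<forall>m. T i (C (i+1) m) + C (i+1) m = C i (T i m) + C i m)"

text \<open>c_D acting on m, with c_D = c_(d1) ... c_(dk) for D = {d1 < ... < dk}.\<close>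
definition cmon :: "(nat \<Rightarrow> 'm \<Rightarrow> 'm) \<Rightarrow> nat set \<Rightarrow> 'm \<Rightarrow> 'm" where
  "cmon C D m = foldr C (sorted_list_of_set D) m"

definition clact :: "nat \<Rightarrow> (complex \<Rightarrow> 'm::ab_group_add \<Rightarrow> 'm) \<Rightarrow> (nat \<Rightarrow> 'm \<Rightarrow> 'm) \<Rightarrow>
    (nat set \<Rightarrow> complex) \<Rightarrow> 'm \<Rightarrow> 'm" where
  "clact n sc C x m = (\<Sum>D\<in>Pow {1..n}. sc (x D) (cmon C D m))"

text \<open>(sc, C, T, eps) is (a copy of) M_I = HCl_n(0) \<otimes>_{H_n(0)} S_I: an HCl_n(0)-module
  with an element eps spanning a copy of S_I (T_j eps = -eps for j \<in> Des I, 0 otherwise)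
  such that the c_D eps, D \<subseteq> {1..n}, form a basis. By the universal property of the
  induced module and the freeness of M_I over Cl_n, such data is exactly M_I up to
  isomorphism of HCl_n(0)-modules (eps corresponding to 1 \<otimes> epsilon_I).\<close>
definition is_MI :: "nat \<Rightarrow> nat list \<Rightarrow> (complex \<Rightarrow> 'm::ab_group_add \<Rightarrow> 'm) \<Rightarrow>
    (nat \<Rightarrow> 'm \<Rightarrow> 'm) \<Rightarrow> (nat \<Rightarrow> 'm \<Rightarrow> 'm) \<Rightarrow> 'm \<Rightarrow> bool" where
  "is_MI n I sc C T eps \<longleftrightarrow>
     hcl_module n sc C T \<and>
     (\<forall>j\<in>{1..<n}. T j eps = (if j \<in> Des I then - eps else 0)) \<and>
     inj_on (\<lambda>D. cmon C D eps) (Pow {1..n}) \<and>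
     \<not> module.dependent sc ((\<lambda>D. cmon C D eps) ` Pow {1..n}) \<and>
     module.span sc ((\<lambda>D. cmon C D eps) ` Pow {1..n}) = UNIV"

definition hcl_endos :: "nat \<Rightarrow> (complex \<Rightarrow> 'm::ab_group_add \<Rightarrow> 'm) \<Rightarrow>
    (nat \<Rightarrow> 'm \<Rightarrow> 'm) \<Rightarrow> (nat \<Rightarrow> 'm \<Rightarrow> 'm) \<Rightarrow> ('m \<Rightarrow> 'm) set" where
  "hcl_endos n sc C T = {f. Vector_Spaces.linear sc sc f \<and>
      (\<forall>j\<in>{1..n}. \<forall>m. f (C j m) = C j (f m)) \<and>
      (\<forall>i\<in>{1..<n}. \<forall>m. f (T i m) = T i (f m))}"

definition M_even :: "nat \<Rightarrow> (complex \<Rightarrow> 'm::ab_group_add \<Rightarrow> 'm) \<Rightarrow> (nat \<Rightarrow> 'm \<Rightarrow> 'm) \<Rightarrow> 'm \<Rightarrow> 'm set" where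
  "M_even n sc C eps = module.span sc ((\<lambda>D. cmon C D eps) ` {D\<in>Pow {1..n}. even (card D)})"

definition M_odd :: "nat \<Rightarrow> (complex \<Rightarrow> 'm::ab_group_add \<Rightarrow> 'm) \<Rightarrow> (nat \<Rightarrow> 'm \<Rightarrow> 'm) \<Rightarrow> 'm \<Rightarrow> 'm set" where
  "M_odd n sc C eps = module.span sc ((\<lambda>D. cmon C D eps) ` {D\<in>Pow {1..n}. odd (card D)})"

definition endo_even :: "nat \<Rightarrow> (complex \<Rightarrow> 'm::ab_group_add \<Rightarrow> 'm) \<Rightarrow> (nat \<Rightarrow> 'm \<Rightarrow> 'm) \<Rightarrow> 'm \<Rightarrow> ('m \<Rightarrow> 'm) \<Rightarrow> bool" where
  "endo_even n sc C eps f \<longleftrightarrow> f ` M_even n sc C eps \<subseteq> M_even n sc C eps \<and> f ` M_odd n sc C eps \<subseteq> M_odd n sc C eps"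

definition endo_odd :: "nat \<Rightarrow> (complex \<Rightarrow> 'm::ab_group_add \<Rightarrow> 'm) \<Rightarrow> (nat \<Rightarrow> 'm \<Rightarrow> 'm) \<Rightarrow> 'm \<Rightarrow> ('m \<Rightarrow> 'm) \<Rightarrow> bool" where
  "endo_odd n sc C eps f \<longleftrightarrow> f ` M_even n sc C eps \<subseteq> M_odd n sc C eps \<and> f ` M_odd n sc C eps \<subseteq> M_even n sc C eps"

end

theory Submission
  imports Defs
begin

definition sg :: "nat \<Rightarrow> nat \<Rightarrow> complex" where
  "sg a b = (if b \<le> a then -1 else 1)"

lemma sg_sq[simp]: "sg a b * sg a b = 1"
  by (simp add: sg_def)

lemma clsign_prod:
  assumes "finite D" "finite E"
  shows "clsign D E = (\<Prod>a\<in>D. \<Prod>b\<in>E. sg a b)"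
proof -
  have 1: "(\<Prod>a\<in>D. \<Prod>b\<in>E. sg a b) = (\<Prod>a\<in>D. \<Prod>b\<in>E. (-1::complex) ^ (if b \<le> a then 1 else 0))"
    by (intro prod.cong refl) (simp add: sg_def)
  also have "\<dots> = (-1) ^ (\<Sum>a\<in>D. \<Sum>b\<in>E. (if b \<le> a then 1 else 0))"
    by (simp add: power_sum)
  also have "(\<Sum>a\<in>D. \<Sum>b\<in>E. (if b \<le> a then 1 else 0)) = (\<Sum>a\<in>D. card {b\<in>E. b \<le> a})"
  proof (intro sum.cong refl)
    fix a show "(\<Sum>b\<in>E. (if b \<le> a then 1 else 0)) = card {b\<in>E. b \<le> a}"
      using sum.inter_filter[of E "\<lambda>_. 1::nat" "\<lambda>b. b \<le> a"] assms by simp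
  qed
  also have "\<dots> = card (Sigma D (\<lambda>a. {b\<in>E. b \<le> a}))"
    using assms by (simp add: card_SigmaI)
  also have "Sigma D (\<lambda>a. {b\<in>E. b \<le> a}) = {(a, b). a \<in> D \<and> b \<in> E \<and> b < a} \<union> (\<lambda>x. (x,x)) ` (D \<inter> E)"
    by auto
  also have "card \<dots> = card {(a, b). a \<in> D \<and> b \<in> E \<and> b < a} + card ((\<lambda>x. (x,x)) ` (D \<inter> E))"
  proof (rule card_Un_disjoint)
    show "finite {(a, b). a \<in> D \<and> b \<in> E \<and> b < a}"
      by (rule finite_subset[of _ "D \<times> E"]) (use assms in auto)
  qed (use assms in auto)
  also have "card ((\<lambda>x. (x,x)) ` (D \<inter> E)) = card (D \<inter> E)"
    by (rule card_image) (auto simp: inj_on_def)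
  finally show ?thesis by (simp add: clsign_def)
qed

lemma prod_symdiff:
  fixes f :: "nat \<Rightarrow> complex"
  assumes "finite A" "finite B" "\<And>x. f x * f x = 1"
  shows "prod f (symdiff A B) = prod f A * prod f B"
proof -
  have a: "prod f A = prod f (A - B) * prod f (A \<inter> B)"
    using assms by (metis mult.commute prod.Int_Diff)
  have b: "prod f B = prod f (B - A) * prod f (A \<inter> B)"
    using assms by (metis Int_commute mult.commute prod.Int_Diff)
  have c: "prod f (symdiff A B) = prod f (A - B) * prod f (B - A)"
    unfolding symdiff_def using assms by (intro prod.union_disjoint) auto
  have d: "prod f (A \<inter> B) * prod f (A \<inter> B) = 1"
    by (simp add: prod.distrib[symmetric] assms)
  show ?thesis using a b c d by (simp add: algebra_simps)
qed

lemma finite_symdiff[simp]: "finite A \<Longrightarrow> finite B \<Longrightarrow> finite (symdiff A B)"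
  by (simp add: symdiff_def)

lemma clsign_left:
  assumes "finite A" "finite A'" "finite B"
  shows "clsign (symdiff A A') B = clsign A B * clsign A' B"
  using assms by (simp add: clsign_prod prod_symdiff prod.distrib[symmetric])

lemma clsign_right:
  assumes "finite A" "finite B" "finite B'"
  shows "clsign A (symdiff B B') = clsign A B * clsign A B'"
  using assms by (simp add: clsign_prod prod_symdiff prod.distrib[symmetric])

lemma clsign_sq: "finite A \<Longrightarrow> finite B \<Longrightarrow> clsign A B * clsign A B = 1"
  by (simp add: clsign_prod prod.distrib[symmetric])

lemma clsign_lt:
  assumes "finite A" "finite B" "\<forall>a\<in>A. \<forall>b\<in>B. a < b"
  shows "clsign A B = 1"
proof -
  have "\<forall>a\<in>A. (\<Prod>b\<in>B. sg a b) = 1"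
  proof
    fix a assume "a \<in> A"
    then have "\<forall>b\<in>B. sg a b = 1" using assms(3) by (auto simp: sg_def not_le)
    then show "(\<Prod>b\<in>B. sg a b) = 1" by simp
  qed
  then show ?thesis using assms by (simp add: clsign_prod)
qed

lemma clsign_single: "finite E \<Longrightarrow> clsign {j} E = (\<Prod>b\<in>E. sg j b)"
  by (simp add: clsign_prod)

lemma symdiff_cancel[simp]: "symdiff D (symdiff D E) = E"
  by (auto simp: symdiff_def)

lemma symdiff_assoc: "symdiff (symdiff A B) E = symdiff A (symdiff B E)"
  by (auto simp: symdiff_def)

lemma symdiff_comm: "symdiff A B = symdiff B A"
  by (auto simp: symdiff_def)

lemma symdiff_empty[simp]: "symdiff A {} = A" "symdiff {} A = A"
  by (auto simp: symdiff_def)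

lemma symdiff_insert: "d \<notin> X \<Longrightarrow> symdiff {d} X = insert d X"
  by (auto simp: symdiff_def)

lemma symdiff_self_insert: "d \<notin> X \<Longrightarrow> symdiff {d} (insert d X) = X"
  by (auto simp: symdiff_def)

lemma card_symdiff:
  assumes "finite A" "finite B"
  shows "card (symdiff A B) + 2 * card (A \<inter> B) = card A + card B"
proof -
  have "card (symdiff A B) = card (A - B) + card (B - A)"
    unfolding symdiff_def using assms by (intro card_Un_disjoint) auto
  moreover have "card A = card (A - B) + card (A \<inter> B)"
    using assms by (metis Int_commute add.commute card_Int_Diff inf_commute)
  moreover have "card B = card (B - A) + card (A \<inter> B)"
    using assms by (metis Int_commute add.commute card_Int_Diff)
  ultimately show ?thesis by simp
qed

lemma even_card_symdiff:
  assumes "finite A" "finite B"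
  shows "even (card (symdiff A B)) \<longleftrightarrow> (even (card A) \<longleftrightarrow> even (card B))"
proof -
  have "even (card (symdiff A B)) \<longleftrightarrow> even (card (symdiff A B) + 2 * card (A \<inter> B))" by simp
  also have "\<dots> \<longleftrightarrow> even (card A + card B)" by (simp only: card_symdiff[OF assms])
  finally show ?thesis by simp
qed

lemma cmon_insert_min:
  assumes "finite X" "\<forall>x\<in>X. d < x"
  shows "cmon C (insert d X) m = C d (cmon C X m)"
proof -
  have "Min (insert d X) = d" using assms by (auto intro!: Min_eqI simp: less_imp_le)
  moreover have "insert d X - {d} = X" using assms by auto
  ultimately have "sorted_list_of_set (insert d X) = d # sorted_list_of_set X"
    using assms sorted_list_of_set_nonempty[of "insert d X"] by simp
  then show ?thesis by (simp add: cmon_def)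
qed

lemma cmon_empty[simp]: "cmon C {} m = m"
  by (simp add: cmon_def)

lemma cmon_single[simp]: "cmon C {j} m = C j m"
  by (simp add: cmon_def)

lemma sorted_set_induct:
  fixes D :: "nat set"
  assumes "finite D"
    "P {}"
    "\<And>d X. finite X \<Longrightarrow> \<forall>x\<in>X. d < x \<Longrightarrow> P X \<Longrightarrow> P (insert d X)"
  shows "P D"
  using assms(1)
proof (induction "card D" arbitrary: D)
  case 0 then show ?case using assms by simp
next
  case (Suc k)
  then have ne: "D \<noteq> {}" by auto
  define d where "d = Min D"
  have "D = insert d (D - {d})" using ne Suc d_def Min_in by auto
  moreover have "P (D - {d})" using Suc ne d_def by (simp add: Min_in)
  moreover have "\<forall>x\<in>D - {d}. d < x" using Suc.prems d_def by (auto simp: order.strict_iff_order)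
  ultimately show ?case using assms(3)[of "D - {d}" d] Suc.prems by auto
qed

definition clmono :: "nat set \<Rightarrow> nat set \<Rightarrow> complex" where
  "clmono D = (\<lambda>E. if E = D then 1 else 0)"

lemma clone_mono: "clone = clmono {}"
  by (simp add: clone_def clmono_def fun_eq_iff)

lemma clgen_mono: "clgen j = clmono {j}"
  by (simp add: clgen_def clmono_def fun_eq_iff)

lemma clifford_mono: "D \<subseteq> {1..n} \<Longrightarrow> clmono D \<in> clifford n"
  by (simp add: clifford_def clmono_def)

lemma clifford_add: "x \<in> clifford n \<Longrightarrow> y \<in> clifford n \<Longrightarrow> cladd x y \<in> clifford n"
  unfolding clifford_def cladd_def
proof (intro CollectI allI impI)
  fix D assume "x \<in> {x. \<forall>D. x D \<noteq> 0 \<longrightarrow> D \<subseteq> {1..n}}" "y \<in> {x. \<forall>D. x D \<noteq> 0 \<longrightarrow> D \<subseteq> {1..n}}"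
    "x D + y D \<noteq> 0"
  then show "D \<subseteq> {1..n}" by (cases "x D = 0") auto
qed

lemma clifford_scale: "x \<in> clifford n \<Longrightarrow> clscale a x \<in> clifford n"
  by (auto simp: clifford_def clscale_def)

lemma symdiff_Pow: "D \<subseteq> A \<Longrightarrow> E \<subseteq> A \<Longrightarrow> symdiff D E \<subseteq> A"
  by (auto simp: symdiff_def)

lemma clifford_mul: "y \<in> clifford n \<Longrightarrow> clmul n x y \<in> clifford n"
proof -
  assume y: "y \<in> clifford n"
  show ?thesis unfolding clifford_def
  proof (intro CollectI allI impI)
    fix E assume "clmul n x y E \<noteq> 0"
    then obtain D where D: "D \<in> Pow {1..n}" "y (symdiff D E) \<noteq> 0"
      unfolding clmul_def by (metis (no_types, lifting) mult_eq_0_iff mult_zero_right sum.neutral)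
    then have s: "symdiff D E \<subseteq> {1..n}" using y by (auto simp: clifford_def)
    have "symdiff D (symdiff D E) \<subseteq> {1..n}" using symdiff_Pow[of D "{1..n}" "symdiff D E"] D s by blast
    then show "E \<subseteq> {1..n}" by (metis symdiff_cancel)
  qed
qed

locale MIL =
  fixes n :: nat and I :: "nat list"
    and sc :: "complex \<Rightarrow> 'm::ab_group_add \<Rightarrow> 'm"
    and C T :: "nat \<Rightarrow> 'm \<Rightarrow> 'm" and eps :: 'm
  assumes comp: "is_composition I n" and mi: "is_MI n I sc C T eps"
begin

lemma hcl: "hcl_module n sc C T" using mi by (simp add: is_MI_def)

lemma hcl_f1: "vector_space sc"
  using hcl unfolding hcl_module_def by (elim conjE) assumption

lemma hcl_f2: "\<forall>j\<in>{1..n}. Vector_Spaces.linear sc sc (C j)"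
  using hcl unfolding hcl_module_def by (elim conjE) assumption

lemma hcl_f3: "\<forall>i\<in>{1..<n}. Vector_Spaces.linear sc sc (T i)"
  using hcl unfolding hcl_module_def by (elim conjE) assumption

lemma hcl_f4: "\<forall>i\<in>{1..n}. \<forall>j\<in>{1..n}. i \<noteq> j \<longrightarrow> (\<forall>m. C i (C j m) = - C j (C i m))"
  using hcl unfolding hcl_module_def by (elim conjE) assumption

lemma hcl_f5: "\<forall>i\<in>{1..n}. \<forall>m. C i (C i m) = - m"
  using hcl unfolding hcl_module_def by (elim conjE) assumption

lemma hcl_f6: "\<forall>i\<in>{1..<n}. \<forall>j\<in>{1..n}. j \<noteq> i \<and> j \<noteq> i + 1 \<longrightarrow> (\<forall>m. T i (C j m) = C j (T i m))"
  using hcl unfolding hcl_module_def by (elim conjE) assumption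

lemma hcl_f7: "\<forall>i\<in>{1..<n}. \<forall>m. T i (C i m) = C (i+1) (T i m)"
  using hcl unfolding hcl_module_def by (elim conjE) assumption

lemma hcl_f8: "\<forall>i\<in>{1..<n}. \<forall>m. T i (C (i+1) m) + C (i+1) m = C i (T i m) + C i m"
  using hcl unfolding hcl_module_def by (elim conjE) assumption

lemmas hcl_facts = hcl_f1 hcl_f2 hcl_f3 hcl_f4 hcl_f5 hcl_f6 hcl_f7 hcl_f8

sublocale V: vector_space sc by (rule hcl_facts(1))

lemma C_hom: "j \<in> {1..n} \<Longrightarrow> module_hom sc sc (C j)"
  using hcl_facts(2) by (simp add: module_hom_iff_linear)

lemma T_hom: "i \<in> {1..<n} \<Longrightarrow> module_hom sc sc (T i)"
  using hcl_facts(3) by (simp add: module_hom_iff_linear)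

lemma C_anti: "i \<in> {1..n} \<Longrightarrow> j \<in> {1..n} \<Longrightarrow> i \<noteq> j \<Longrightarrow> C i (C j m) = - C j (C i m)"
  using hcl_facts(4) by blast

lemma C_sq: "i \<in> {1..n} \<Longrightarrow> C i (C i m) = - m"
  using hcl_facts(5) by blast

lemma T_C: "i \<in> {1..<n} \<Longrightarrow> j \<in> {1..n} \<Longrightarrow> j \<noteq> i \<Longrightarrow> j \<noteq> i + 1 \<Longrightarrow> T i (C j m) = C j (T i m)"
  using hcl_facts(6) by blast

lemma T_Ci: "i \<in> {1..<n} \<Longrightarrow> T i (C i m) = C (i+1) (T i m)"
  using hcl_facts(7) by blast

lemma T_Ci1: "i \<in> {1..<n} \<Longrightarrow> T i (C (i+1) m) = C i (T i m) + C i m - C (i+1) m"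
proof -
  assume "i \<in> {1..<n}"
  then have "T i (C (i+1) m) + C (i+1) m = C i (T i m) + C i m"
    using hcl_facts(8) by blast
  then show ?thesis by (simp add: algebra_simps)
qed

definition tau :: "nat \<Rightarrow> complex" where
  "tau j = (if j \<in> Des I then -1 else 0)"

lemma T_eps: "j \<in> {1..<n} \<Longrightarrow> T j eps = sc (tau j) eps"
  using mi by (simp add: is_MI_def tau_def)

lemma basis_inj: "inj_on (\<lambda>D. cmon C D eps) (Pow {1..n})"
  using mi by (simp add: is_MI_def)

lemma basis_indep: "\<not> V.dependent ((\<lambda>D. cmon C D eps) ` Pow {1..n})"
  using mi by (simp add: is_MI_def)

lemma basis_span: "V.span ((\<lambda>D. cmon C D eps) ` Pow {1..n}) = UNIV"
  using mi by (simp add: is_MI_def)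

lemma foldr_hom: "set xs \<subseteq> {1..n} \<Longrightarrow> module_hom sc sc (foldr C xs)"
proof (induction xs)
  case Nil
  then show ?case using V.module_hom_ident by (simp add: module_hom_iff_linear)
next
  case (Cons a xs)
  then have "module_hom sc sc (C a \<circ> foldr C xs)"
    by (intro module_hom_compose[OF _ C_hom]) auto
  then show ?case by (simp add: o_def)
qed

lemma cmon_hom: "D \<subseteq> {1..n} \<Longrightarrow> module_hom sc sc (cmon C D)"
proof -
  assume D: "D \<subseteq> {1..n}"
  then have "finite D" using finite_subset by blast
  then have "set (sorted_list_of_set D) \<subseteq> {1..n}" using D by simp
  then show ?thesis unfolding cmon_def[abs_def] using foldr_hom by auto
qed

lemma C_add: "j \<in> {1..n} \<Longrightarrow> C j (a + b) = C j a + C j b"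
  using module_hom.add[OF C_hom] by blast
lemma C_scale: "j \<in> {1..n} \<Longrightarrow> C j (sc r a) = sc r (C j a)"
  using module_hom.scale[OF C_hom] by blast
lemma C_zero: "j \<in> {1..n} \<Longrightarrow> C j 0 = 0"
  using module_hom.zero[OF C_hom] by blast
lemma C_diff: "j \<in> {1..n} \<Longrightarrow> C j (a - b) = C j a - C j b"
  using module_hom.diff[OF C_hom] by blast
lemma C_neg: "j \<in> {1..n} \<Longrightarrow> C j (- a) = - C j a"
  using module_hom.neg[OF C_hom] by blast

lemma T_add: "i \<in> {1..<n} \<Longrightarrow> T i (a + b) = T i a + T i b"
  using module_hom.add[OF T_hom] by blast
lemma T_scale: "i \<in> {1..<n} \<Longrightarrow> T i (sc r a) = sc r (T i a)"
  using module_hom.scale[OF T_hom] by blast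
lemma T_diff: "i \<in> {1..<n} \<Longrightarrow> T i (a - b) = T i a - T i b"
  using module_hom.diff[OF T_hom] by blast

lemma cmon_add: "D \<subseteq> {1..n} \<Longrightarrow> cmon C D (a + b) = cmon C D a + cmon C D b"
  using module_hom.add[OF cmon_hom] by blast
lemma cmon_scale: "D \<subseteq> {1..n} \<Longrightarrow> cmon C D (sc r a) = sc r (cmon C D a)"
  using module_hom.scale[OF cmon_hom] by blast
lemma cmon_sum: "D \<subseteq> {1..n} \<Longrightarrow> cmon C D (sum g S) = (\<Sum>a\<in>S. cmon C D (g a))"
  using module_hom.sum[OF cmon_hom] by blast
lemma cmon_zero: "D \<subseteq> {1..n} \<Longrightarrow> cmon C D 0 = 0"
  using module_hom.zero[OF cmon_hom] by blast
lemma cmon_diff: "D \<subseteq> {1..n} \<Longrightarrow> cmon C D (a - b) = cmon C D a - cmon C D b"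
  using module_hom.diff[OF cmon_hom] by blast

lemma C_cmon:
  assumes j: "j \<in> {1..n}" and D: "D \<subseteq> {1..n}"
  shows "C j (cmon C D m) = sc (clsign {j} D) (cmon C (symdiff {j} D) m)"
proof -
  have "finite D" using D finite_subset by blast
  have "\<forall>m. D \<subseteq> {1..n} \<longrightarrow> C j (cmon C D m) = sc (clsign {j} D) (cmon C (symdiff {j} D) m)"
  proof (induction D rule: sorted_set_induct)
    case 1 show ?case by fact
  next
    case 2 show ?case by (simp add: clsign_single)
  next
    case (3 d X)
    show ?case
    proof (intro allI impI)
      fix m assume dX: "insert d X \<subseteq> {1..n}"
      then have X: "X \<subseteq> {1..n}" and d: "d \<in> {1..n}" by auto
      have dnX: "d \<notin> X" using 3(2) by auto
      have e1: "cmon C (insert d X) m = C d (cmon C X m)"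
        using 3(1,2) by (simp add: cmon_insert_min)
      consider "j < d" | "j = d" | "d < j" by arith
      then show "C j (cmon C (insert d X) m) = sc (clsign {j} (insert d X)) (cmon C (symdiff {j} (insert d X)) m)"
      proof cases
        case 1
        have jn: "j \<notin> insert d X" using 1 3(1,2) by auto
        have "symdiff {j} (insert d X) = insert j (insert d X)" using jn by (simp add: symdiff_insert)
        moreover have "cmon C (insert j (insert d X)) m = C j (cmon C (insert d X) m)"
          using 1 3(1,2) by (intro cmon_insert_min) auto
        moreover have "clsign {j} (insert d X) = 1"
          using 1 3(1,2) by (intro clsign_lt) auto
        ultimately show ?thesis by simp
      next
        case 2
        have "symdiff {j} (insert d X) = X" using 2 dnX by (simp add: symdiff_self_insert)
        moreover have "clsign {j} (insert d X) = -1"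
        proof -
          have "(\<Prod>b\<in>X. sg d b) = 1" using 3(2) by (intro prod.neutral) (auto simp: sg_def)
          then show ?thesis using 2 3(1,2) dnX by (simp add: clsign_single sg_def)
        qed
        ultimately show ?thesis using e1 2 C_sq[OF d] by simp
      next
        case 4: 3
        have jX: "{j} \<subseteq> {1..n}" using j by auto
        have IH: "C j (cmon C X m) = sc (clsign {j} X) (cmon C (symdiff {j} X) m)"
          using 3(3) X by simp
        have fin: "finite (symdiff {j} X)" using 3(1) by simp
        have gt: "\<forall>x\<in>symdiff {j} X. d < x" using 3(2) 4 by (auto simp: symdiff_def)
        have "C j (cmon C (insert d X) m) = - C d (C j (cmon C X m))"
          using e1 C_anti[OF j d] 4 by simp
        also have "\<dots> = sc (- clsign {j} X) (C d (cmon C (symdiff {j} X) m))"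
          using IH C_scale[OF d] by simp
        also have "C d (cmon C (symdiff {j} X) m) = cmon C (insert d (symdiff {j} X)) m"
          by (rule cmon_insert_min[OF fin gt, symmetric])
        also have "insert d (symdiff {j} X) = symdiff {j} (insert d X)"
          using 4 dnX by (auto simp: symdiff_def)
        also have "- clsign {j} X = clsign {j} (insert d X)"
          using 3(1,2) 4 dnX by (simp add: clsign_single sg_def)
        finally show ?thesis .
      qed
    qed
  qed
  from this[rule_format, OF D] show ?thesis .
qed

lemma cmon_cmon:
  assumes D: "D \<subseteq> {1..n}" and E: "E \<subseteq> {1..n}"
  shows "cmon C D (cmon C E m) = sc (clsign D E) (cmon C (symdiff D E) m)"
proof -
  have "finite D" using D finite_subset by blast
  have fE: "finite E" using E finite_subset by blast
  have "D \<subseteq> {1..n} \<longrightarrow> cmon C D (cmon C E m) = sc (clsign D E) (cmon C (symdiff D E) m)"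
  proof (induction D rule: sorted_set_induct)
    case 1 show ?case by fact
  next
    case 2 show ?case using fE by (simp add: clsign_prod)
  next
    case (3 d X)
    show ?case
    proof
      assume dX: "insert d X \<subseteq> {1..n}"
      then have X: "X \<subseteq> {1..n}" and d: "d \<in> {1..n}" by auto
      have dnX: "d \<notin> X" using 3(2) by auto
      have fX: "finite X" using 3(1) by simp
      have "cmon C (insert d X) (cmon C E m) = C d (cmon C X (cmon C E m))"
        using 3(1,2) by (simp add: cmon_insert_min)
      also have "\<dots> = C d (sc (clsign X E) (cmon C (symdiff X E) m))"
        using 3(3) X by simp
      also have "\<dots> = sc (clsign X E) (C d (cmon C (symdiff X E) m))"
        using C_scale[OF d] by simp
      also have "C d (cmon C (symdiff X E) m) = sc (clsign {d} (symdiff X E)) (cmon C (symdiff {d} (symdiff X E)) m)"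
        using C_cmon[OF d symdiff_Pow[OF X E]] by simp
      also have "symdiff {d} (symdiff X E) = symdiff (insert d X) E"
        using dnX by (simp add: symdiff_assoc[symmetric] symdiff_insert)
      also have "sc (clsign X E) (sc (clsign {d} (symdiff X E)) (cmon C (symdiff (insert d X) E) m))
          = sc (clsign (insert d X) E) (cmon C (symdiff (insert d X) E) m)"
      proof -
        have "clsign {d} (symdiff X E) = clsign {d} X * clsign {d} E"
          using fX fE by (simp add: clsign_right)
        moreover have "clsign {d} X = 1" using 3(1,2) by (intro clsign_lt) auto
        moreover have "clsign (insert d X) E = clsign {d} E * clsign X E"
          using clsign_left[of "{d}" X E] fX fE dnX by (simp add: symdiff_insert)
        ultimately show ?thesis by (simp add: mult.commute)
      qed
      finally show "cmon C (insert d X) (cmon C E m) = sc (clsign (insert d X) E) (cmon C (symdiff (insert d X) E) m)" .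
    qed
  qed
  from this[rule_format, OF D] show ?thesis .
qed

lemma cmon_union_lt:
  assumes "A \<subseteq> {1..n}" "B \<subseteq> {1..n}" "\<forall>a\<in>A. \<forall>b\<in>B. a < b"
  shows "cmon C A (cmon C B m) = cmon C (A \<union> B) m"
proof -
  have "finite A" "finite B" using assms finite_subset by blast+
  then have "clsign A B = 1" using assms by (intro clsign_lt) auto
  moreover have "symdiff A B = A \<union> B" using assms(3) by (auto simp: symdiff_def)
  ultimately show ?thesis using cmon_cmon[OF assms(1,2)] by simp
qed

end

context MIL
begin

lemma symdiff_Pow2: "D \<in> Pow A \<Longrightarrow> E \<in> Pow A \<Longrightarrow> symdiff D E \<in> Pow A"
  by (simp add: symdiff_Pow)

lemma V_module: "module sc"
  using hcl_f1 by (simp add: module_iff_vector_space)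

lemma clact_mono: "D \<subseteq> {1..n} \<Longrightarrow> clact n sc C (clmono D) m = cmon C D m"
proof -
  assume D: "D \<subseteq> {1..n}"
  have "clact n sc C (clmono D) m = (\<Sum>E\<in>Pow {1..n}. (if E = D then cmon C D m else 0))"
    unfolding clact_def clmono_def by (intro sum.cong refl) auto
  also have "\<dots> = cmon C D m" using D by (simp add: sum.delta)
  finally show ?thesis .
qed

lemma clact_one: "clact n sc C clone m = m"
  by (simp add: clone_mono clact_mono)

lemma clact_gen: "j \<in> {1..n} \<Longrightarrow> clact n sc C (clgen j) m = C j m"
  by (simp add: clgen_mono clact_mono)

lemma clact_add: "clact n sc C (cladd x y) m = clact n sc C x m + clact n sc C y m"
  unfolding clact_def cladd_def by (simp add: V.scale_left_distrib sum.distrib)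

lemma clact_scale: "clact n sc C (clscale a x) m = sc a (clact n sc C x m)"
  unfolding clact_def clscale_def by (simp add: V.scale_sum_right)

lemma clact_hom: "module_hom sc sc (clact n sc C x)"
  unfolding module_hom_iff
proof (intro conjI allI V_module)
  fix m1 m2
  show "clact n sc C x (m1 + m2) = clact n sc C x m1 + clact n sc C x m2"
    unfolding clact_def sum.distrib[symmetric]
    by (intro sum.cong refl) (simp add: cmon_add V.scale_right_distrib)
next
  fix c m
  show "clact n sc C x (sc c m) = sc c (clact n sc C x m)"
    unfolding clact_def V.scale_sum_right
    by (intro sum.cong refl) (simp add: cmon_scale mult.commute)
qed

lemma clact_radd: "clact n sc C x (m1 + m2) = clact n sc C x m1 + clact n sc C x m2"
  using module_hom.add[OF clact_hom] by blast
lemma clact_rscale: "clact n sc C x (sc a m) = sc a (clact n sc C x m)"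
  using module_hom.scale[OF clact_hom] by blast

lemma clact_mul: "clact n sc C (clmul n x y) m = clact n sc C x (clact n sc C y m)"
proof -
  let ?P = "Pow {1..n}"
  have "clact n sc C (clmul n x y) m =
      (\<Sum>E\<in>?P. \<Sum>D\<in>?P. sc (x D * y (symdiff D E) * clsign D (symdiff D E)) (cmon C E m))"
    unfolding clact_def clmul_def by (simp add: V.scale_sum_left)
  also have "\<dots> = (\<Sum>D\<in>?P. \<Sum>E\<in>?P. sc (x D * y (symdiff D E) * clsign D (symdiff D E)) (cmon C E m))"
    by (rule sum.swap)
  also have "\<dots> = (\<Sum>D\<in>?P. \<Sum>F\<in>?P. sc (x D * y F * clsign D F) (cmon C (symdiff D F) m))"
  proof (rule sum.cong[OF refl])
    fix D assume D: "D \<in> ?P"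
    show "(\<Sum>E\<in>?P. sc (x D * y (symdiff D E) * clsign D (symdiff D E)) (cmon C E m)) =
          (\<Sum>F\<in>?P. sc (x D * y F * clsign D F) (cmon C (symdiff D F) m))"
    proof -
      have sP: "\<forall>E\<in>?P. symdiff D E \<in> ?P" using D by (auto simp: symdiff_def)
      show ?thesis
        by (rule sum.reindex_bij_witness[of _ "symdiff D" "symdiff D"]) (use sP in \<open>auto simp del: Pow_iff\<close>)
    qed
  qed
  also have "\<dots> = clact n sc C x (clact n sc C y m)"
    unfolding clact_def
  proof (rule sum.cong[OF refl])
    fix D assume D: "D \<in> ?P"
    then have D': "D \<subseteq> {1..n}" by simp
    have "cmon C D (\<Sum>F\<in>?P. sc (y F) (cmon C F m)) = (\<Sum>F\<in>?P. sc (y F) (sc (clsign D F) (cmon C (symdiff D F) m)))"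
      using D' by (simp add: cmon_sum cmon_scale cmon_cmon)
    then show "(\<Sum>F\<in>?P. sc (x D * y F * clsign D F) (cmon C (symdiff D F) m)) =
        sc (x D) (cmon C D (\<Sum>F\<in>?P. sc (y F) (cmon C F m)))"
      by (simp add: V.scale_sum_right mult.assoc)
  qed
  finally show ?thesis .
qed

lemma indep_sum:
  assumes z: "(\<Sum>D\<in>Pow {1..n}. sc (z D) (cmon C D eps)) = 0" and D: "D \<in> Pow {1..n}"
  shows "z D = 0"
proof -
  let ?b = "\<lambda>D. cmon C D eps"
  let ?S = "?b ` Pow {1..n}"
  have fS: "finite ?S" by simp
  define u where "u v = z (the_inv_into (Pow {1..n}) ?b v)" for v
  have ub: "u (?b E) = z E" if "E \<in> Pow {1..n}" for E
    unfolding u_def using the_inv_into_f_f[OF basis_inj that] by simp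
  have "(\<Sum>v\<in>?S. sc (u v) v) = (\<Sum>E\<in>Pow {1..n}. sc (u (?b E)) (?b E))"
    by (rule sum.reindex[OF basis_inj, unfolded o_def])
  also have "\<dots> = (\<Sum>E\<in>Pow {1..n}. sc (z E) (?b E))"
    by (intro sum.cong refl) (simp add: ub del: Pow_iff)
  also have "\<dots> = 0" by (rule z)
  finally have "(\<Sum>v\<in>?S. sc (u v) v) = 0" .
  with basis_indep V.dependent_finite[OF fS] have "\<forall>v\<in>?S. u v = 0" by blast
  then show ?thesis using ub[OF D] D by auto
qed

lemma exists_coord: "\<exists>x\<in>clifford n. clact n sc C x eps = m"
proof -
  let ?b = "\<lambda>D. cmon C D eps"
  let ?S = "?b ` Pow {1..n}"
  have "m \<in> V.span ?S" using basis_span by simp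
  then obtain u where u: "m = (\<Sum>v\<in>?S. sc (u v) v)" using V.span_finite[of ?S] by auto
  define x where "x D = (if D \<in> Pow {1..n} then u (?b D) else 0)" for D
  have "x \<in> clifford n" by (auto simp: x_def clifford_def)
  moreover have "clact n sc C x eps = m"
  proof -
    have "clact n sc C x eps = (\<Sum>D\<in>Pow {1..n}. sc (u (?b D)) (?b D))"
      unfolding clact_def x_def by (intro sum.cong refl) auto
    also have "\<dots> = (\<Sum>v\<in>?S. sc (u v) v)"
      by (rule sum.reindex[OF basis_inj, unfolded o_def, symmetric])
    finally show ?thesis using u by simp
  qed
  ultimately show ?thesis by blast
qed

lemma clact_eq:
  assumes x: "x \<in> clifford n" and x': "x' \<in> clifford n"
    and eq: "clact n sc C x eps = clact n sc C x' eps"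
  shows "x = x'"
proof
  fix D
  have "(\<Sum>D\<in>Pow {1..n}. sc (x D - x' D) (cmon C D eps)) = clact n sc C x eps - clact n sc C x' eps"
    unfolding clact_def by (simp add: V.scale_left_diff_distrib sum_subtractf)
  also have "\<dots> = 0" using eq by simp
  finally have z: "(\<Sum>D\<in>Pow {1..n}. sc (x D - x' D) (cmon C D eps)) = 0" .
  show "x D = x' D"
  proof (cases "D \<subseteq> {1..n}")
    case True
    then show ?thesis using indep_sum[OF z] by auto
  next
    case False
    then have "x D = 0" "x' D = 0" using x x' unfolding clifford_def by blast+
    then show ?thesis by simp
  qed
qed

definition coord :: "'m \<Rightarrow> nat set \<Rightarrow> complex" where
  "coord m = (SOME x. x \<in> clifford n \<and> clact n sc C x eps = m)"

lemma coord: "coord m \<in> clifford n" "clact n sc C (coord m) eps = m"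
proof -
  have "\<exists>x. x \<in> clifford n \<and> clact n sc C x eps = m" using exists_coord by blast
  then have "coord m \<in> clifford n \<and> clact n sc C (coord m) eps = m"
    unfolding coord_def by (rule someI_ex)
  then show "coord m \<in> clifford n" "clact n sc C (coord m) eps = m" by auto
qed

lemma coord_clact: "x \<in> clifford n \<Longrightarrow> coord (clact n sc C x eps) = x"
  using clact_eq coord by blast

lemma coord_add: "coord (m1 + m2) = cladd (coord m1) (coord m2)"
proof -
  have "clact n sc C (cladd (coord m1) (coord m2)) eps = m1 + m2"
    by (simp add: clact_add coord)
  then show ?thesis
    using coord_clact[OF clifford_add[OF coord(1) coord(1)]] by metis
qed

lemma coord_scale: "coord (sc a m) = clscale a (coord m)"
proof -
  have "clact n sc C (clscale a (coord m)) eps = sc a m"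
    by (simp add: clact_scale coord)
  then show ?thesis
    using coord_clact[OF clifford_scale[OF coord(1)]] by metis
qed

end

lemma sum_Pow_insert:
  fixes g :: "nat set \<Rightarrow> 'a::comm_monoid_add"
  assumes "finite S" "a \<notin> S"
  shows "(\<Sum>D\<in>Pow (insert a S). g D) = (\<Sum>D\<in>Pow S. g D + g (insert a D))"
proof -
  have inj: "inj_on (insert a) (Pow S)" using assms(2) by (auto simp: inj_on_def)
  have "(\<Sum>D\<in>Pow (insert a S). g D) = (\<Sum>D\<in>Pow S. g D) + (\<Sum>D\<in>insert a ` Pow S. g D)"
    unfolding Pow_insert using assms by (intro sum.union_disjoint) auto
  also have "(\<Sum>D\<in>insert a ` Pow S. g D) = (\<Sum>D\<in>Pow S. g (insert a D))"
    by (rule sum.reindex[OF inj, unfolded o_def])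
  finally show ?thesis by (simp add: sum.distrib)
qed

context MIL
begin

lemma T_foldr: "i \<in> {1..<n} \<Longrightarrow> set xs \<subseteq> {1..n} - {i, i+1} \<Longrightarrow> T i (foldr C xs m) = foldr C xs (T i m)"
  by (induction xs) (auto simp: T_C)

lemma T_cmon: "i \<in> {1..<n} \<Longrightarrow> D \<subseteq> {1..n} - {i, i+1} \<Longrightarrow> T i (cmon C D m) = cmon C D (T i m)"
proof -
  assume i: "i \<in> {1..<n}" and D: "D \<subseteq> {1..n} - {i, i+1}"
  then have "finite D" using finite_subset by blast
  then show ?thesis using T_foldr[OF i] D by (simp add: cmon_def)
qed

lemma TB:
  assumes i: "i \<in> {1..<n}" and D0: "D0 \<subseteq> {1..n} - {i, i+1}"
  shows "T i (cmon C D0 eps) = sc (tau i) (cmon C D0 eps)"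
    and "T i (cmon C (insert i D0) eps) = sc (tau i) (cmon C (insert (i+1) D0) eps)"
    and "T i (cmon C (insert (i+1) D0) eps) = sc (tau i + 1) (cmon C (insert i D0) eps) - cmon C (insert (i+1) D0) eps"
    and "T i (cmon C (insert i (insert (i+1) D0)) eps) = cmon C D0 eps - sc (tau i + 1) (cmon C (insert i (insert (i+1) D0)) eps)"
proof -
  define P where "P = {d\<in>D0. d < i}"
  define Q where "Q = {d\<in>D0. i + 1 < d}"
  define w where "w = cmon C Q eps"
  have i1: "i \<in> {1..n}" "i + 1 \<in> {1..n}" using i by auto
  have D0n: "D0 \<subseteq> {1..n}" using D0 by auto
  have D0PQ: "D0 = P \<union> Q" using D0 by (auto simp: P_def Q_def)
  have Pn: "P \<subseteq> {1..n} - {i, i+1}" and Qn: "Q \<subseteq> {1..n} - {i, i+1}"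
    using D0 by (auto simp: P_def Q_def)
  have fQ: "finite Q" using Qn finite_subset by blast
  have split: "cmon C (R \<union> D0) eps = cmon C P (cmon C R w)" if R: "R \<subseteq> {i, i+1}" for R
  proof -
    have "cmon C R w = cmon C (R \<union> Q) eps"
      unfolding w_def using R Qn i1 by (intro cmon_union_lt) (auto simp: Q_def)
    moreover have "cmon C P (cmon C (R \<union> Q) eps) = cmon C (P \<union> (R \<union> Q)) eps"
      using R Pn Qn i1 by (intro cmon_union_lt) (auto simp: P_def Q_def)
    moreover have "P \<union> (R \<union> Q) = R \<union> D0" using D0PQ by auto
    ultimately show ?thesis by simp
  qed
  have s0: "cmon C D0 eps = cmon C P w" using split[of "{}"] by simp
  have s1: "cmon C (insert i D0) eps = cmon C P (C i w)" using split[of "{i}"] by simp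
  have s2: "cmon C (insert (i+1) D0) eps = cmon C P (C (i+1) w)" using split[of "{i+1}"] by simp
  have s3: "cmon C (insert i (insert (i+1) D0)) eps = cmon C P (C i (C (i+1) w))"
  proof -
    have "cmon C {i, i+1} w = C i (cmon C {i+1} w)" by (rule cmon_insert_min) auto
    then show ?thesis using split[of "{i, i+1}"] by simp
  qed
  have Tw: "T i w = sc (tau i) w"
  proof -
    have Qn': "Q \<subseteq> {1..n}" using Qn by auto
    show ?thesis unfolding w_def T_cmon[OF i Qn] T_eps[OF i] cmon_scale[OF Qn'] ..
  qed
  have TP: "T i (cmon C P z) = cmon C P (T i z)" for z using T_cmon[OF i Pn] .
  have Pn': "P \<subseteq> {1..n}" using Pn by auto
  note cP = cmon_scale[OF Pn'] cmon_add[OF Pn'] cmon_diff[OF Pn']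
  note Ci = C_scale[OF i1(1)] C_add[OF i1(1)] C_diff[OF i1(1)]
  note Ci1 = C_scale[OF i1(2)] C_add[OF i1(2)] C_diff[OF i1(2)]
  show "T i (cmon C D0 eps) = sc (tau i) (cmon C D0 eps)"
    unfolding s0 TP Tw cP ..
  show "T i (cmon C (insert i D0) eps) = sc (tau i) (cmon C (insert (i+1) D0) eps)"
    unfolding s1 s2 TP T_Ci[OF i] Tw Ci1 cP ..
  show "T i (cmon C (insert (i+1) D0) eps) = sc (tau i + 1) (cmon C (insert i D0) eps) - cmon C (insert (i+1) D0) eps"
    unfolding s1 s2 TP T_Ci1[OF i] Tw Ci cP by (simp add: V.scale_left_distrib)
  show "T i (cmon C (insert i (insert (i+1) D0)) eps) = cmon C D0 eps - sc (tau i + 1) (cmon C (insert i (insert (i+1) D0)) eps)"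
  proof -
    have ne: "i + 1 \<noteq> i" by simp
    have "T i (C i (C (i+1) w)) = C (i+1) (C i (sc (tau i) w) + C i w - C (i+1) w)"
      unfolding T_Ci[OF i] T_Ci1[OF i] Tw ..
    also have "\<dots> = w - sc (tau i + 1) (C i (C (i+1) w))"
      unfolding Ci Ci1 C_anti[OF i1(2) i1(1) ne] C_sq[OF i1(2)] C_scale[OF i1(1)]
      by (simp add: V.scale_left_distrib algebra_simps C_neg[OF i1(1)])
    finally show ?thesis unfolding s0 s3 TP by (simp add: cmon_diff[OF Pn'] cmon_scale[OF Pn'])
  qed
qed

lemma T_sum: "i \<in> {1..<n} \<Longrightarrow> T i (sum g A) = (\<Sum>a\<in>A. T i (g a))"
  using module_hom.sum[OF T_hom] by blast

lemma T_clact: "i \<in> {1..<n} \<Longrightarrow> T i (clact n sc C y eps) = (\<Sum>D\<in>Pow {1..n}. sc (y D) (T i (cmon C D eps)))"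
  unfolding clact_def by (simp add: T_sum T_scale)

lemma Des_bound: "k \<in> Des I \<Longrightarrow> 1 \<le> k \<and> k < n"
proof -
  assume "k \<in> Des I"
  then obtain j where j: "k = sum_list (take j I)" "1 \<le> j" "j < length I"
    unfolding Des_def by auto
  have pos: "\<forall>x\<in>set I. 0 < x" and sum: "sum_list I = n" using comp by (auto simp: is_composition_def)
  have "I ! 0 \<le> sum_list (take j I)"
  proof -
    have "take j I = I ! 0 # take (j - 1) (drop 1 I)"
      using j by (cases I; cases j) auto
    then show ?thesis by simp
  qed
  moreover have "0 < I ! 0"
  proof -
    have "0 < length I" using j(3) by linarith
    then show ?thesis using pos nth_mem by blast
  qed
  moreover have "0 < sum_list (drop j I)"
  proof -
    have "drop j I = I ! j # drop (Suc j) I" using j by (simp add: Cons_nth_drop_Suc)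
    moreover have "0 < I ! j" using pos j by (simp add: nth_mem)
    ultimately show ?thesis by simp
  qed
  moreover have "sum_list (take j I) + sum_list (drop j I) = n"
    using sum by (metis append_take_drop_id sum_list_append)
  ultimately show ?thesis using j by linarith
qed

lemma valley_props:
  assumes "k \<in> valleys I n"
  shows "k \<in> {1..n}" "k \<notin> Des I" "k = 1 \<or> k - 1 \<in> Des I"
  using assms by (auto simp: valleys_def)

lemma basis_V:
  assumes i: "i \<in> {1..<n}" and D: "D \<subseteq> valleys I n"
  shows "T i (cmon C D eps) = sc (tau i) (cmon C D eps)"
proof -
  define D0 where "D0 = D - {i, i+1}"
  have Dn: "D \<subseteq> {1..n}" using D valley_props by blast
  have D0: "D0 \<subseteq> {1..n} - {i, i+1}" using Dn by (auto simp: D0_def)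
  show ?thesis
  proof (cases "i \<in> Des I")
    case True
    then have "i \<notin> D" using D valley_props by blast
    then consider "D = D0" | "D = insert (i+1) D0" by (auto simp: D0_def)
    then show ?thesis
    proof cases
      case 1 then show ?thesis using TB(1)[OF i D0] by simp
    next
      case 2 then show ?thesis using TB(3)[OF i D0] True by (simp add: tau_def)
    qed
  next
    case False
    then have "i + 1 \<notin> D" using D valley_props i by fastforce
    then consider "D = D0" | "D = insert i D0" by (auto simp: D0_def)
    then show ?thesis
    proof cases
      case 1 then show ?thesis using TB(1)[OF i D0] by simp
    next
      case 2 then show ?thesis using TB(2)[OF i D0] False by (simp add: tau_def)
    qed
  qed
qed

lemma easy_dir:
  assumes i: "i \<in> {1..<n}" and y: "\<forall>D. y D \<noteq> 0 \<longrightarrow> D \<subseteq> valleys I n"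
  shows "T i (clact n sc C y eps) = sc (tau i) (clact n sc C y eps)"
proof -
  have "T i (clact n sc C y eps) = (\<Sum>D\<in>Pow {1..n}. sc (y D) (T i (cmon C D eps)))"
    by (rule T_clact[OF i])
  also have "\<dots> = (\<Sum>D\<in>Pow {1..n}. sc (tau i) (sc (y D) (cmon C D eps)))"
  proof (rule sum.cong[OF refl])
    fix D
    show "sc (y D) (T i (cmon C D eps)) = sc (tau i) (sc (y D) (cmon C D eps))"
    proof (cases "y D = 0")
      case True then show ?thesis by simp
    next
      case False then show ?thesis using basis_V[OF i] y by (simp add: mult.commute)
    qed
  qed
  also have "\<dots> = sc (tau i) (clact n sc C y eps)"
    unfolding clact_def by (simp add: V.scale_sum_right)
  finally show ?thesis .
qed

end

lemma clsub_supp: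
  assumes "x \<in> clsub n V0"
  shows "\<forall>D. x D \<noteq> 0 \<longrightarrow> D \<subseteq> V0"
  using assms
proof (induction rule: clsub.induct)
  case one then show ?case by (simp add: clone_def)
next
  case (gen v) then show ?case by (simp add: clgen_def)
next
  case (add x y)
  show ?case
  proof (intro allI impI)
    fix D assume "cladd x y D \<noteq> 0"
    then have "x D \<noteq> 0 \<or> y D \<noteq> 0" by (auto simp: cladd_def)
    then show "D \<subseteq> V0" using add.IH(1)[rule_format, of D] add.IH(2)[rule_format, of D] by (elim disjE)
  qed
next
  case (scale x a)
  then show ?case by (simp add: clscale_def)
next
  case (mul x y)
  show ?case
  proof (intro allI impI)
    fix E assume "clmul n x y E \<noteq> 0"
    then obtain D where D: "D \<in> Pow {1..n}" "x D * y (symdiff D E) * clsign D (symdiff D E) \<noteq> 0"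
      unfolding clmul_def by (rule sum.not_neutral_contains_not_neutral)
    then have "x D \<noteq> 0" "y (symdiff D E) \<noteq> 0" by auto
    then have "D \<subseteq> V0" "symdiff D E \<subseteq> V0"
      using mul.IH(1)[rule_format, of D] mul.IH(2)[rule_format, of "symdiff D E"] by simp_all
    then have "symdiff D (symdiff D E) \<subseteq> V0" by (rule symdiff_Pow)
    then show "E \<subseteq> V0" by (simp only: symdiff_cancel)
  qed
qed

lemma supp_clifford: "V0 \<subseteq> {1..n} \<Longrightarrow> \<forall>D. x D \<noteq> 0 \<longrightarrow> D \<subseteq> V0 \<Longrightarrow> x \<in> clifford n"
  unfolding clifford_def by (auto dest: spec[of _ x])

lemma clmul_gen_mono:
  assumes d: "d \<in> {1..n}" and X: "finite X" "\<forall>x\<in>X. d < x"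
  shows "clmul n (clgen d) (clmono X) = clmono (insert d X)"
proof
  fix E
  have "clmul n (clgen d) (clmono X) E =
      (\<Sum>D\<in>Pow {1..n}. if D = {d} then clmono X (symdiff {d} E) * clsign {d} (symdiff {d} E) else 0)"
    unfolding clmul_def clgen_def by (intro sum.cong refl) auto
  also have "\<dots> = clmono X (symdiff {d} E) * clsign {d} (symdiff {d} E)"
    using d by (simp add: sum.delta)
  also have "\<dots> = clmono (insert d X) E"
  proof (cases "symdiff {d} E = X")
    case True
    have dX: "d \<notin> X" using X by auto
    have "E = symdiff {d} (symdiff {d} E)" by (simp only: symdiff_cancel)
    then have "E = symdiff {d} X" using True by simp
    then have "E = insert d X" using symdiff_insert[OF dX] by simp
    moreover have "clsign {d} X = 1" using X by (intro clsign_lt) auto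
    ultimately show ?thesis using True by (simp add: clmono_def)
  next
    case False
    have dX: "d \<notin> X" using X by auto
    have "E \<noteq> insert d X"
    proof
      assume "E = insert d X"
      then have "symdiff {d} E = X" using symdiff_self_insert[OF dX] by simp
      then show False using False by simp
    qed
    then show ?thesis using False by (simp add: clmono_def)
  qed
  finally show "clmul n (clgen d) (clmono X) E = clmono (insert d X) E" .
qed

lemma mono_clsub:
  assumes V0: "V0 \<subseteq> {1..n}" and D: "D \<subseteq> V0"
  shows "clmono D \<in> clsub n V0"
proof -
  have fD: "finite D" using finite_subset[OF subset_trans[OF D V0]] by simp
  have "D \<subseteq> V0 \<longrightarrow> clmono D \<in> clsub n V0"
  proof (induction D rule: sorted_set_induct)
    case 1 show ?case by (rule fD)
  next
    case 2 show ?case unfolding clone_mono[symmetric] by (intro impI clsub.one)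
  next
    case (3 d X)
    show ?case
    proof
      assume dX: "insert d X \<subseteq> V0"
      then have X0: "X \<subseteq> V0" by simp
      have m: "clmono X \<in> clsub n V0" using 3(3) X0 by (rule mp)
      have d0: "d \<in> V0" using dX by simp
      have g: "clgen d \<in> clsub n V0" using d0 by (rule clsub.gen)
      have mm: "clmul n (clgen d) (clmono X) \<in> clsub n V0" using g m by (rule clsub.mul)
      have dn: "d \<in> {1..n}" using V0 d0 by (rule subsetD)
      have "clmul n (clgen d) (clmono X) = clmono (insert d X)"
        by (rule clmul_gen_mono[OF dn 3(1,2)])
      then show "clmono (insert d X) \<in> clsub n V0" using mm by simp
    qed
  qed
  from this D show ?thesis by (rule mp)
qed

lemma supp_clsub:
  assumes V0: "V0 \<subseteq> {1..n}" and x: "\<forall>D. x D \<noteq> 0 \<longrightarrow> D \<subseteq> V0"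
  shows "x \<in> clsub n V0"
proof -
  have fin: "finite (Pow V0)" using V0 finite_subset by blast
  have "A \<subseteq> Pow V0 \<longrightarrow> (\<lambda>E. if E \<in> A then x E else 0) \<in> clsub n V0" if "finite A" for A
    using that
  proof (induction A rule: finite_induct)
    case empty
    have "(\<lambda>E. if E \<in> {} then x E else 0) = clscale 0 clone" by (simp add: clscale_def fun_eq_iff)
    then show ?case using clsub.scale[OF clsub.one] by simp
  next
    case (insert a A)
    show ?case
    proof
      assume aA: "insert a A \<subseteq> Pow V0"
      have "(\<lambda>E. if E \<in> insert a A then x E else 0) =
          cladd (clscale (x a) (clmono a)) (\<lambda>E. if E \<in> A then x E else 0)"
        using insert(2) by (auto simp: cladd_def clscale_def clmono_def fun_eq_iff)
      moreover have "clmono a \<in> clsub n V0" using aA V0 by (intro mono_clsub) auto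
      moreover have "(\<lambda>E. if E \<in> A then x E else 0) \<in> clsub n V0" using insert aA by simp
      ultimately show "(\<lambda>E. if E \<in> insert a A then x E else 0) \<in> clsub n V0"
        by (simp add: clsub.add clsub.scale)
    qed
  qed
  from this[OF fin] have "(\<lambda>E. if E \<in> Pow V0 then x E else 0) \<in> clsub n V0" by simp
  moreover have "(\<lambda>E. if E \<in> Pow V0 then x E else 0) = x" using x by (auto simp: fun_eq_iff)
  ultimately show ?thesis by simp
qed

context MIL
begin

lemma hard_i:
  assumes i: "i \<in> {1..<n}" and y: "y \<in> clifford n"
    and eq: "T i (clact n sc C y eps) = sc (tau i) (clact n sc C y eps)"
    and D: "D \<subseteq> {1..n}"
  shows "(i \<in> Des I \<longrightarrow> i \<in> D \<longrightarrow> y D = 0) \<and> (i \<notin> Des I \<longrightarrow> i + 1 \<in> D \<longrightarrow> y D = 0)"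
proof -
  define t where "t = tau i"
  define z where "z D = (if i \<in> D \<and> i+1 \<in> D then -(1+2*t) * y D
      else if i \<in> D then -t * y D + (t+1) * y (insert (i+1) (D - {i}))
      else if i+1 \<in> D then t * y (insert i (D - {i+1})) - (1+t) * y D
      else y (insert i (insert (i+1) D)))" for D
  define S where "S = {1..n} - {i, i+1}"
  have fS: "finite S" by (simp add: S_def)
  have nS: "{1..n} = insert i (insert (i+1) S)" using i by (auto simp: S_def)
  have split: "(\<Sum>D\<in>Pow {1..n}. g D) = (\<Sum>D0\<in>Pow S. (g D0 + g (insert i D0)) + (g (insert (i+1) D0) + g (insert i (insert (i+1) D0))))"
    for g :: "nat set \<Rightarrow> 'm"
  proof -
    have "(\<Sum>D\<in>Pow {1..n}. g D) = (\<Sum>D\<in>Pow (insert (i+1) S). g D + g (insert i D))"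
      unfolding nS using fS by (intro sum_Pow_insert) (auto simp: S_def)
    also have "\<dots> = (\<Sum>D0\<in>Pow S. (g D0 + g (insert i D0)) + (g (insert (i+1) D0) + g (insert i (insert (i+1) D0))))"
      using fS by (intro sum_Pow_insert) (auto simp: S_def)
    finally show ?thesis .
  qed
  let ?b = "\<lambda>D. cmon C D eps"
  have "T i (clact n sc C y eps) - sc t (clact n sc C y eps) =
      (\<Sum>D\<in>Pow {1..n}. sc (y D) (T i (?b D)) - sc t (sc (y D) (?b D)))"
    unfolding T_clact[OF i] t_def by (simp add: clact_def V.scale_sum_right sum_subtractf)
  also have "\<dots> = (\<Sum>D\<in>Pow {1..n}. sc (z D) (?b D))"
    unfolding split
  proof (rule sum.cong[OF refl])
    fix D0 assume "D0 \<in> Pow S"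
    then have D0: "D0 \<subseteq> {1..n} - {i, i+1}" by (simp add: S_def)
    then have ni: "i \<notin> D0" "i + 1 \<notin> D0" by auto
    have z0: "z D0 = y (insert i (insert (i+1) D0))" using ni by (simp add: z_def)
    have z1: "z (insert i D0) = -t * y (insert i D0) + (t+1) * y (insert (i+1) D0)"
      using ni by (simp add: z_def)
    have z2: "z (insert (i+1) D0) = t * y (insert i D0) - (1+t) * y (insert (i+1) D0)"
      using ni by (simp add: z_def)
    have z3: "z (insert i (insert (i+1) D0)) = -(1+2*t) * y (insert i (insert (i+1) D0))"
      by (simp add: z_def)
    have tv: "t = -1 \<or> t = 0" by (simp add: t_def tau_def)
    note TB' = TB[OF i D0, folded t_def]
    show "sc (y D0) (T i (?b D0)) - sc t (sc (y D0) (?b D0)) + (sc (y (insert i D0)) (T i (?b (insert i D0))) - sc t (sc (y (insert i D0)) (?b (insert i D0)))) +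
          ((sc (y (insert (i + 1) D0)) (T i (?b (insert (i + 1) D0))) - sc t (sc (y (insert (i + 1) D0)) (?b (insert (i + 1) D0)))) +
           (sc (y (insert i (insert (i + 1) D0))) (T i (?b (insert i (insert (i + 1) D0)))) - sc t (sc (y (insert i (insert (i + 1) D0))) (?b (insert i (insert (i + 1) D0)))))) =
          sc (z D0) (?b D0) + sc (z (insert i D0)) (?b (insert i D0)) +
          (sc (z (insert (i + 1) D0)) (?b (insert (i + 1) D0)) + sc (z (insert i (insert (i + 1) D0))) (?b (insert i (insert (i + 1) D0))))"
      unfolding TB' z0 z1 z2 z3
      using tv by (elim disjE) (simp_all add: V.scale_right_diff_distrib)
  qed
  finally have "(\<Sum>D\<in>Pow {1..n}. sc (z D) (?b D)) = 0" using eq by (simp add: t_def)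
  then have zD: "z D = 0" by (rule indep_sum) (rule PowI[OF D])
  show ?thesis
  proof (intro conjI impI)
    assume "i \<in> Des I" "i \<in> D"
    then have "t = -1" by (simp add: t_def tau_def)
    then have "z D = y D" using \<open>i \<in> D\<close> by (simp add: z_def)
    then show "y D = 0" using zD by simp
  next
    assume "i \<notin> Des I" "i + 1 \<in> D"
    then have "t = 0" by (simp add: t_def tau_def)
    then have "z D = - y D" using \<open>i + 1 \<in> D\<close> by (simp add: z_def)
    then show "y D = 0" using zD by simp
  qed
qed

end

context MIL
begin

lemma VP: "module_pair sc sc"
  by (simp add: module_pair_def V_module)

lemma eq_on_basis:
  assumes f: "module_hom sc sc f" and g: "module_hom sc sc g"
    and b: "\<And>D. D \<subseteq> {1..n} \<Longrightarrow> f (cmon C D eps) = g (cmon C D eps)"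
  shows "f m = g m"
proof -
  interpret VP: module_pair sc sc by (rule VP)
  have "m \<in> V.span ((\<lambda>D. cmon C D eps) ` Pow {1..n})" using basis_span by simp
  then show ?thesis
    using VP.module_hom_eq_on_span[OF f g, of "(\<lambda>D. cmon C D eps) ` Pow {1..n}" m] b by auto
qed

lemma comm_foldr:
  assumes g: "module_hom sc sc g" and gC: "\<forall>j\<in>{1..n}. \<forall>m. g (C j m) = C j (g m)"
  shows "set xs \<subseteq> {1..n} \<Longrightarrow> g (foldr C xs m) = foldr C xs (g m)"
  by (induction xs) (use gC in auto)

lemma comm_cmon:
  assumes g: "module_hom sc sc g" and gC: "\<forall>j\<in>{1..n}. \<forall>m. g (C j m) = C j (g m)"
    and D: "D \<subseteq> {1..n}"
  shows "g (cmon C D m) = cmon C D (g m)"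
proof -
  have "finite D" using finite_subset[OF D] by simp
  then show ?thesis unfolding cmon_def using comm_foldr[OF g gC] D by simp
qed

lemma comm_clact:
  assumes g: "module_hom sc sc g" and gC: "\<forall>j\<in>{1..n}. \<forall>m. g (C j m) = C j (g m)"
  shows "g (clact n sc C x m) = clact n sc C x (g m)"
  unfolding clact_def using comm_cmon[OF g gC]
  by (simp add: module_hom.sum[OF g] module_hom.scale[OF g])

lemma T_commute:
  assumes g: "module_hom sc sc g" and gC: "\<forall>j\<in>{1..n}. \<forall>m. g (C j m) = C j (g m)"
    and i: "i \<in> {1..<n}" and gT: "g (T i eps) = T i (g eps)"
  shows "g (T i m) = T i (g m)"
proof -
  have i1: "i \<in> {1..n}" "i + 1 \<in> {1..n}" using i by auto
  have base: "g (T i (foldr C xs eps)) = T i (g (foldr C xs eps))" if "set xs \<subseteq> {1..n}" for xs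
    using that
  proof (induction xs)
    case Nil then show ?case using gT by simp
  next
    case (Cons j xs)
    define m' where "m' = foldr C xs eps"
    have IH: "g (T i m') = T i (g m')" using Cons unfolding m'_def by simp
    have j: "j \<in> {1..n}" using Cons by simp
    have "g (T i (C j m')) = T i (g (C j m'))"
    proof -
      consider "j = i" | "j = i + 1" | "j \<noteq> i" "j \<noteq> i + 1" by blast
      then show ?thesis
      proof cases
        case 1
        have "g (T i (C j m')) = g (C (i+1) (T i m'))" using 1 T_Ci[OF i] by simp
        also have "\<dots> = C (i+1) (T i (g m'))" using gC i1 IH by simp
        also have "\<dots> = T i (C i (g m'))" using T_Ci[OF i] by simp
        also have "\<dots> = T i (g (C j m'))" using gC i1 1 by simp
        finally show ?thesis .
      next
        case 2
        have "g (T i (C j m')) = g (C i (T i m') + C i m' - C (i+1) m')" using 2 T_Ci1[OF i] by simp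
        also have "\<dots> = C i (T i (g m')) + C i (g m') - C (i+1) (g m')"
          using gC i1 IH by (simp add: module_hom.add[OF g] module_hom.diff[OF g])
        also have "\<dots> = T i (C (i+1) (g m'))" using T_Ci1[OF i] by simp
        also have "\<dots> = T i (g (C j m'))" using gC i1 2 by simp
        finally show ?thesis .
      next
        case 3
        have "g (T i (C j m')) = g (C j (T i m'))" using 3 T_C[OF i j] by simp
        also have "\<dots> = C j (T i (g m'))" using gC j IH by simp
        also have "\<dots> = T i (C j (g m'))" using 3 T_C[OF i j] by simp
        also have "\<dots> = T i (g (C j m'))" using gC j by simp
        finally show ?thesis .
      qed
    qed
    then show ?case unfolding m'_def by simp
  qed
  have h1: "module_hom sc sc (\<lambda>m. g (T i m))"
    using module_hom_compose[OF T_hom[OF i] g] by (simp add: o_def)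
  have h2: "module_hom sc sc (\<lambda>m. T i (g m))"
    using module_hom_compose[OF g T_hom[OF i]] by (simp add: o_def)
  show ?thesis
  proof (rule eq_on_basis[OF h1 h2])
    fix D assume D: "D \<subseteq> {1..n}"
    then have "finite D" using finite_subset by blast
    then have "set (sorted_list_of_set D) \<subseteq> {1..n}" using D by simp
    then show "g (T i (cmon C D eps)) = T i (g (cmon C D eps))"
      unfolding cmon_def by (rule base)
  qed
qed

end

context MIL
begin

definition Fm :: "(nat set \<Rightarrow> complex) \<Rightarrow> 'm \<Rightarrow> 'm" where
  "Fm c m = clact n sc C (clmul n (coord m) c) eps"

lemma clone_clifford: "clone \<in> clifford n"
  by (simp add: clone_mono clifford_mono)

lemma coord_eps: "coord eps = clone"
  using coord_clact[OF clone_clifford] clact_one by simp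

lemma Fm_alt: "Fm c m = clact n sc C (coord m) (clact n sc C c eps)"
  by (simp add: Fm_def clact_mul)

lemma Fm_hom: "module_hom sc sc (Fm c)"
  unfolding module_hom_iff
  by (simp add: V_module Fm_alt coord_add coord_scale clact_add clact_scale)

lemma coord_C: "j \<in> {1..n} \<Longrightarrow> coord (C j m) = clmul n (clgen j) (coord m)"
proof -
  assume j: "j \<in> {1..n}"
  have "clact n sc C (clmul n (clgen j) (coord m)) eps = C j m"
    by (simp add: clact_mul coord clact_gen[OF j])
  then show ?thesis using coord_clact[OF clifford_mul[OF coord(1)]] by metis
qed

lemma Fm_C: "j \<in> {1..n} \<Longrightarrow> Fm c (C j m) = C j (Fm c m)"
  by (simp add: Fm_alt coord_C clact_mul clact_gen)

lemma Fm_eps: "Fm c eps = clact n sc C c eps"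
  by (simp add: Fm_alt coord_eps clact_one)

lemma V_sub: "valleys I n \<subseteq> {1..n}"
  by (auto simp: valleys_def)

lemma Fm_endo:
  assumes c: "c \<in> clsub n (valleys I n)"
  shows "Fm c \<in> hcl_endos n sc C T"
proof -
  have supp: "\<forall>D. c D \<noteq> 0 \<longrightarrow> D \<subseteq> valleys I n" by (rule clsub_supp[OF c])
  have gC: "\<forall>j\<in>{1..n}. \<forall>m. Fm c (C j m) = C j (Fm c m)" by (simp add: Fm_C)
  have gT: "Fm c (T i m) = T i (Fm c m)" if i: "i \<in> {1..<n}" for i m
  proof (rule T_commute[OF Fm_hom gC i])
    have "Fm c (T i eps) = sc (tau i) (Fm c eps)"
      using T_eps[OF i] module_hom.scale[OF Fm_hom] by simp
    also have "\<dots> = T i (Fm c eps)"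
      unfolding Fm_eps using easy_dir[OF i supp] by simp
    finally show "Fm c (T i eps) = T i (Fm c eps)" .
  qed
  show ?thesis
    unfolding hcl_endos_def using Fm_hom gC gT by (simp add: module_hom_iff_linear)
qed

lemma endo_Fm:
  assumes g: "g \<in> hcl_endos n sc C T"
  shows "\<exists>c\<in>clsub n (valleys I n). g = Fm c"
proof -
  have gh: "module_hom sc sc g" and gC: "\<forall>j\<in>{1..n}. \<forall>m. g (C j m) = C j (g m)"
    and gT: "\<forall>i\<in>{1..<n}. \<forall>m. g (T i m) = T i (g m)"
    using g by (simp_all add: hcl_endos_def module_hom_iff_linear)
  define y where "y = coord (g eps)"
  have y: "y \<in> clifford n" unfolding y_def by (rule coord(1))
  have gy: "clact n sc C y eps = g eps" unfolding y_def by (rule coord(2))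
  have gF: "g = Fm y"
  proof
    fix m
    have "g m = g (clact n sc C (coord m) eps)" using coord(2) by simp
    also have "\<dots> = clact n sc C (coord m) (g eps)" by (rule comm_clact[OF gh gC])
    also have "\<dots> = Fm y m" by (simp add: Fm_alt gy)
    finally show "g m = Fm y m" .
  qed
  have Teq: "T i (clact n sc C y eps) = sc (tau i) (clact n sc C y eps)" if i: "i \<in> {1..<n}" for i
  proof -
    have "T i (clact n sc C y eps) = g (T i eps)" using gy gT i by simp
    also have "\<dots> = sc (tau i) (g eps)" using T_eps[OF i] module_hom.scale[OF gh] by simp
    finally show ?thesis using gy by simp
  qed
  have supp: "\<forall>D. y D \<noteq> 0 \<longrightarrow> D \<subseteq> valleys I n"
  proof (intro allI impI subsetI)
    fix D k assume yD: "y D \<noteq> 0" and k: "k \<in> D"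
    have Dn: "D \<subseteq> {1..n}" using y yD unfolding clifford_def by blast
    have kn: "k \<in> {1..n}" using Dn k by (rule subsetD)
    have k1: "k \<notin> Des I"
    proof
      assume kD: "k \<in> Des I"
      then have ki: "k \<in> {1..<n}" using Des_bound by simp
      have "y D = 0" using hard_i[OF ki y Teq[OF ki] Dn] kD k by simp
      then show False using yD by simp
    qed
    have k2: "k = 1 \<or> k - 1 \<in> Des I"
    proof (rule ccontr)
      assume "\<not> (k = 1 \<or> k - 1 \<in> Des I)"
      then have a: "k \<noteq> 1" "k - 1 \<notin> Des I" by auto
      have ki: "k - 1 \<in> {1..<n}" using a kn by auto
      have "k - 1 + 1 = k" using a kn by auto
      then have "y D = 0" using hard_i[OF ki y Teq[OF ki] Dn] a k by simp
      then show False using yD by simp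
    qed
    show "k \<in> valleys I n" unfolding valleys_def using kn k1 k2 by simp
  qed
  have "y \<in> clsub n (valleys I n)" by (rule supp_clsub[OF V_sub supp])
  then show ?thesis using gF by blast
qed

lemma clact_in_span:
  assumes "\<forall>E\<in>Pow {1..n}. x E \<noteq> 0 \<longrightarrow> P E"
  shows "clact n sc C x eps \<in> V.span ((\<lambda>D. cmon C D eps) ` {E\<in>Pow {1..n}. P E})"
  unfolding clact_def
proof (rule V.span_sum)
  fix E assume E: "E \<in> Pow {1..n}"
  show "sc (x E) (cmon C E eps) \<in> V.span ((\<lambda>D. cmon C D eps) ` {E\<in>Pow {1..n}. P E})"
  proof (cases "x E = 0")
    case True then show ?thesis by (simp add: V.span_zero)
  next
    case False
    then have "P E" using assms E by blast
    then have "cmon C E eps \<in> (\<lambda>D. cmon C D eps) ` {E\<in>Pow {1..n}. P E}" using E by blast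
    then show ?thesis by (intro V.span_scale V.span_base)
  qed
qed

lemma grade:
  assumes c: "c \<in> clifford n" and q: "\<forall>D. c D \<noteq> 0 \<longrightarrow> (even (card D) \<longleftrightarrow> q)"
  shows "Fm c ` V.span ((\<lambda>D. cmon C D eps) ` {D\<in>Pow {1..n}. even (card D) = p})
     \<subseteq> V.span ((\<lambda>D. cmon C D eps) ` {D\<in>Pow {1..n}. even (card D) = (p = q)})"
proof -
  interpret FH: module_hom sc sc "Fm c" by (rule Fm_hom)
  let ?T = "V.span ((\<lambda>D. cmon C D eps) ` {D\<in>Pow {1..n}. even (card D) = (p = q)})"
  have "Fm c ` ((\<lambda>D. cmon C D eps) ` {D\<in>Pow {1..n}. even (card D) = p}) \<subseteq> ?T"
  proof (rule image_subsetI)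
    fix v assume "v \<in> (\<lambda>D. cmon C D eps) ` {D\<in>Pow {1..n}. even (card D) = p}"
    then obtain D where D: "D \<subseteq> {1..n}" "even (card D) = p" and v: "v = cmon C D eps" by auto
    have fD: "finite D" using finite_subset[OF D(1)] by simp
    have cv: "coord v = clmono D" using coord_clact[OF clifford_mono[OF D(1)]] clact_mono[OF D(1)] v by simp
    have Fv: "Fm c v = clact n sc C (clmul n (clmono D) c) eps" by (simp add: Fm_def cv)
    have cm: "clmul n (clmono D) c E = c (symdiff D E) * clsign D (symdiff D E)" for E
    proof -
      have "clmul n (clmono D) c E = (\<Sum>D'\<in>Pow {1..n}. if D' = D then c (symdiff D E) * clsign D (symdiff D E) else 0)"
        unfolding clmul_def clmono_def by (intro sum.cong refl) auto
      also have "\<dots> = c (symdiff D E) * clsign D (symdiff D E)" using D(1) by (simp add: sum.delta)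
      finally show ?thesis .
    qed
    have "clact n sc C (clmul n (clmono D) c) eps \<in> ?T"
    proof (rule clact_in_span, intro ballI impI)
      fix E assume E: "E \<in> Pow {1..n}" and nz: "clmul n (clmono D) c E \<noteq> 0"
      then have "c (symdiff D E) \<noteq> 0" using cm by auto
      then have e1: "even (card (symdiff D E)) = q" using q by blast
      have fE: "finite E" using E finite_subset by auto
      have "even (card (symdiff D E)) \<longleftrightarrow> (even (card D) \<longleftrightarrow> even (card E))"
        by (rule even_card_symdiff[OF fD fE])
      then show "even (card E) = (p = q)" using e1 D(2) by auto
    qed
    then show "Fm c v \<in> ?T" using Fv by simp
  qed
  then have "V.span (Fm c ` ((\<lambda>D. cmon C D eps) ` {D\<in>Pow {1..n}. even (card D) = p})) \<subseteq> ?T"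
    by (intro V.span_minimal V.subspace_span)
  then show ?thesis using FH.span_image by simp
qed

lemma main:
  "\<exists>F. (\<forall>c\<in>clsub n (valleys I n). \<forall>x\<in>clifford n.
                 F c (clact n sc C x eps) = clact n sc C (clmul n x c) eps)
           \<and> bij_betw F (clsub n (valleys I n)) (hcl_endos n sc C T)
           \<and> (\<forall>c\<in>clsub n (valleys I n). \<forall>c'\<in>clsub n (valleys I n). F (clmul n c c') = F c' \<circ> F c)
           \<and> (\<forall>c\<in>clsub n (valleys I n). \<forall>c'\<in>clsub n (valleys I n). \<forall>a m.
                 F (cladd (clscale a c) c') m = sc a (F c m) + F c' m)
           \<and> (\<forall>c\<in>clsub n (valleys I n). cl_even c \<longrightarrow> endo_even n sc C eps (F c))
           \<and> (\<forall>c\<in>clsub n (valleys I n). cl_odd c \<longrightarrow> endo_odd n sc C eps (F c))"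
proof (intro exI[of _ Fm] conjI ballI allI impI)
  have cl: "c \<in> clifford n" if "c \<in> clsub n (valleys I n)" for c
    by (rule supp_clifford[OF V_sub clsub_supp[OF that]])
  fix c x assume c: "c \<in> clsub n (valleys I n)" and x: "x \<in> clifford n"
  show "Fm c (clact n sc C x eps) = clact n sc C (clmul n x c) eps"
    by (simp add: Fm_def coord_clact[OF x])
next
  have cl: "c \<in> clifford n" if "c \<in> clsub n (valleys I n)" for c
    by (rule supp_clifford[OF V_sub clsub_supp[OF that]])
  show "bij_betw Fm (clsub n (valleys I n)) (hcl_endos n sc C T)"
    unfolding bij_betw_def
  proof
    show "inj_on Fm (clsub n (valleys I n))"
    proof (rule inj_onI)
      fix c c' assume c: "c \<in> clsub n (valleys I n)" and c': "c' \<in> clsub n (valleys I n)"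
        and eq: "Fm c = Fm c'"
      then have "Fm c eps = Fm c' eps" by simp
      then have "clact n sc C c eps = clact n sc C c' eps" by (simp add: Fm_eps)
      then show "c = c'" by (rule clact_eq[OF cl[OF c] cl[OF c']])
    qed
    show "Fm ` clsub n (valleys I n) = hcl_endos n sc C T"
      using Fm_endo endo_Fm by blast
  qed
next
  fix c c' assume c: "c \<in> clsub n (valleys I n)" and c': "c' \<in> clsub n (valleys I n)"
  have cl: "c \<in> clifford n"
    by (rule supp_clifford[OF V_sub clsub_supp[OF c]])
  show "Fm (clmul n c c') = Fm c' \<circ> Fm c"
  proof
    fix m
    have "coord (Fm c m) = clmul n (coord m) c"
      unfolding Fm_def by (rule coord_clact[OF clifford_mul[OF cl]])
    then show "Fm (clmul n c c') m = (Fm c' \<circ> Fm c) m"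
      by (simp add: Fm_alt clact_mul)
  qed
next
  fix c c' a m
  show "Fm (cladd (clscale a c) c') m = sc a (Fm c m) + Fm c' m"
    by (simp add: Fm_alt clact_add clact_scale clact_radd clact_rscale)
next
  fix c assume c: "c \<in> clsub n (valleys I n)" and ev: "cl_even c"
  have cl: "c \<in> clifford n"
    by (rule supp_clifford[OF V_sub clsub_supp[OF c]])
  have q: "\<forall>D. c D \<noteq> 0 \<longrightarrow> (even (card D) \<longleftrightarrow> True)" using ev by (simp add: cl_even_def)
  show "endo_even n sc C eps (Fm c)"
    unfolding endo_even_def M_even_def M_odd_def
    using grade[OF cl q, of True] grade[OF cl q, of False] by simp
next
  fix c assume c: "c \<in> clsub n (valleys I n)" and od: "cl_odd c"
  have cl: "c \<in> clifford n"
    by (rule supp_clifford[OF V_sub clsub_supp[OF c]])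
  have q: "\<forall>D. c D \<noteq> 0 \<longrightarrow> (even (card D) \<longleftrightarrow> False)" using od by (simp add: cl_odd_def)
  show "endo_odd n sc C eps (Fm c)"
    unfolding endo_odd_def M_even_def M_odd_def
    using grade[OF cl q, of True] grade[OF cl q, of False] by simp
qed

end

theorem mainTheorem10:
  fixes n :: nat and I :: "nat list"
    and sc :: "complex \<Rightarrow> 'm::ab_group_add \<Rightarrow> 'm"
    and C T :: "nat \<Rightarrow> 'm \<Rightarrow> 'm" and eps :: 'm
  assumes "is_composition I n"
    and "is_MI n I sc C T eps"
  defines "V \<equiv> valleys I n"
  shows "\<exists>F. (\<forall>c\<in>clsub n V. \<forall>x\<in>clifford n.
                 F c (clact n sc C x eps) = clact n sc C (clmul n x c) eps)
           \<and> bij_betw F (clsub n V) (hcl_endos n sc C T)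
           \<and> (\<forall>c\<in>clsub n V. \<forall>c'\<in>clsub n V. F (clmul n c c') = F c' \<circ> F c)
           \<and> (\<forall>c\<in>clsub n V. \<forall>c'\<in>clsub n V. \<forall>a m.
                 F (cladd (clscale a c) c') m = sc a (F c m) + F c' m)
           \<and> (\<forall>c\<in>clsub n V. cl_even c \<longrightarrow> endo_even n sc C eps (F c))
           \<and> (\<forall>c\<in>clsub n V. cl_odd c \<longrightarrow> endo_odd n sc C eps (F c))"
proof -
  interpret MIL n I sc C T eps by (rule MIL.intro[OF assms(1,2)])
  show ?thesis unfolding V_def by (rule main)
qed

end
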